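(* Let $(G,{\bf p})$ be a framework in $\mathbb R^d$ whose configuration ${\bf p}$ has $d$-dimensional affine span. Let $\tilde V$ be a subset of the vertices, $\tilde G$ the subgraph induced on $\tilde V$, and $\tilde{\bf p}$ the corresponding subconfiguration, and suppose $(\tilde G,\tilde{\bf p})$ is universally rigid and the affine span of $\tilde{\bf p}$ has dimension $\tilde d<d$. Suppose that for each vertex $i\notin\tilde V$, the affine span of the points ${\bf p}_k$ for neighbours $k\in\tilde V$ of $i$ has dimension $\tilde d$. Write $\mathbb R^d=\mathbb R^{\tilde d}\times\mathbb R^{d-\tilde d}$ with the affine span of $\tilde{\bf p}$ equal to $\mathbb R^{\tilde d}\times\{{\bf p}_0\}$, and let $\pi:\mathbb R^d\to\mathbb R^{d-\tilde d}$ be the orthogonal projection onto the second factor, so $\pi$ maps all points of $\tilde{\bf p}$ to ${\bf p}_0$. Let $G'$ be the subgraph of $G$ induced on the vertices not in $\tilde V$. Then $(G,{\bf p})$ is universally rigid (respectively dimensionally rigid) if and only if the coned framework ${\bf p}_0*(G',\pi({\bf p}))$ in $\mathbb R^{d-\tilde d}$ is universally rigid (respectively dimensionally rigid).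
   Context: The coned framework ${\bf p}_0*(G',\pi({\bf p}))$ has a vertex at ${\bf p}_0$ joined by bars to every vertex $i$ of $G'$, vertex $i$ placed at $\pi({\bf p}_i)$, together with the bars of $G'$. A framework is universally rigid if every configuration in any $\mathbb R^D$ with the same bar lengths has all pairwise distances equal to those of the original; a framework with $d'$-dimensional affine span is dimensionally rigid if every configuration in any $\mathbb R^D$ with the same bar lengths has affine span of dimension at most $d'$. *)

theory Defs
  imports "HOL-Analysis.Analysis" "HOL-Library.Function_Algebras"
begin

text \<open>Points of R^D are represented as functions nat => real; a configuration q of a
vertex set V lies in R^D when all coordinates k >= D of every q i vanish.
This allows quantification over all dimensions D inside a formula.\<close>

definition scaleF :: "real \<Rightarrow> (nat \<Rightarrow> real) \<Rightarrow> (nat \<Rightarrow> real)" where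
  "scaleF r f = (\<lambda>k. r * f k)"

lemma vector_space_scaleF: "vector_space scaleF"
  by unfold_locales (auto simp: scaleF_def fun_eq_iff algebra_simps)

definition sqd :: "nat \<Rightarrow> (nat \<Rightarrow> real) \<Rightarrow> (nat \<Rightarrow> real) \<Rightarrow> real" where
  "sqd D x y = (\<Sum>k<D. (x k - y k)^2)"

definition in_space :: "nat \<Rightarrow> 'v set \<Rightarrow> ('v \<Rightarrow> nat \<Rightarrow> real) \<Rightarrow> bool" where
  "in_space D V q \<longleftrightarrow> (\<forall>i\<in>V. \<forall>k\<ge>D. q i k = 0)"

text \<open>dimension of the affine span of the points q i, i in V (-1 for the empty set)\<close>
definition affdim :: "'v set \<Rightarrow> ('v \<Rightarrow> nat \<Rightarrow> real) \<Rightarrow> int" where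
  "affdim V q = (if V = {} then -1
     else int (vector_space.dim scaleF {q i - q j | i j. i \<in> V \<and> j \<in> V}))"

definition equivalent_fw ::
  "'v set \<Rightarrow> ('v \<times> 'v) set \<Rightarrow> nat \<Rightarrow> ('v \<Rightarrow> nat \<Rightarrow> real) \<Rightarrow> nat \<Rightarrow> ('v \<Rightarrow> nat \<Rightarrow> real) \<Rightarrow> bool" where
  "equivalent_fw V E D p D' q \<longleftrightarrow> in_space D' V q \<and>
     (\<forall>(i,j)\<in>E. sqd D' (q i) (q j) = sqd D (p i) (p j))"

definition universally_rigid ::
  "'v set \<Rightarrow> ('v \<times> 'v) set \<Rightarrow> nat \<Rightarrow> ('v \<Rightarrow> nat \<Rightarrow> real) \<Rightarrow> bool" where
  "universally_rigid V E D p \<longleftrightarrow>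
     (\<forall>D' q. equivalent_fw V E D p D' q \<longrightarrow>
        (\<forall>i\<in>V. \<forall>j\<in>V. sqd D' (q i) (q j) = sqd D (p i) (p j)))"

definition dimensionally_rigid ::
  "'v set \<Rightarrow> ('v \<times> 'v) set \<Rightarrow> nat \<Rightarrow> ('v \<Rightarrow> nat \<Rightarrow> real) \<Rightarrow> bool" where
  "dimensionally_rigid V E D p \<longleftrightarrow>
     (\<forall>D' q. equivalent_fw V E D p D' q \<longrightarrow> affdim V q \<le> affdim V p)"

definition induced :: "('v \<times> 'v) set \<Rightarrow> 'v set \<Rightarrow> ('v \<times> 'v) set" where
  "induced E W = {(i,j) \<in> E. i \<in> W \<and> j \<in> W}"

definition neighbours :: "('v \<times> 'v) set \<Rightarrow> 'v \<Rightarrow> 'v set" where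
  "neighbours E i = {k. (i,k) \<in> E}"

definition proj2 :: "nat \<Rightarrow> nat \<Rightarrow> (nat \<Rightarrow> real) \<Rightarrow> (nat \<Rightarrow> real)" where
  "proj2 d dt x = (\<lambda>k. if k < d - dt then x (k + dt) else 0)"

text \<open>Coned framework p0 * (G', q): cone vertex None, vertex i of G' is Some i.\<close>
definition cone_vertices :: "'v set \<Rightarrow> 'v option set" where
  "cone_vertices V' = insert None (Some ` V')"

definition cone_edges :: "'v set \<Rightarrow> ('v \<times> 'v) set \<Rightarrow> ('v option \<times> 'v option) set" where
  "cone_edges V' E' = {(None, Some i) | i. i \<in> V'} \<union> {(Some i, None) | i. i \<in> V'}
      \<union> {(Some i, Some j) | i j. (i,j) \<in> E'}"

definition cone_config :: "(nat \<Rightarrow> real) \<Rightarrow> ('v \<Rightarrow> nat \<Rightarrow> real) \<Rightarrow> 'v option \<Rightarrow> nat \<Rightarrow> real" where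
  "cone_config p0 q v = (case v of None \<Rightarrow> p0 | Some i \<Rightarrow> q i)"

end

theory Submission
  imports Defs
begin


global_interpretation F: vector_space scaleF by (rule vector_space_scaleF)

lemma sum_fun_apply: "(\<Sum>t\<in>I. g t) k = (\<Sum>t\<in>I. g t k)"
  by (induction I rule: infinite_finite_induct) auto

definition comb :: "'i set \<Rightarrow> ('i \<Rightarrow> real) \<Rightarrow> ('i \<Rightarrow> nat \<Rightarrow> real) \<Rightarrow> nat \<Rightarrow> real" where
  "comb I c f = (\<lambda>k. \<Sum>t\<in>I. c t * f t k)"

lemma comb_in_span: "finite I \<Longrightarrow> comb I c f \<in> F.span (f ` I)"
proof -
  assume fI: "finite I"
  have "comb I c f = (\<Sum>t\<in>I. scaleF (c t) (f t))"
    by (simp add: comb_def fun_eq_iff sum_fun_apply scaleF_def)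
  also have "\<dots> \<in> F.span (f ` I)"
    by (intro F.span_sum F.span_scale F.span_base) auto
  finally show ?thesis .
qed

lemma span_comb: assumes "finite I" "x \<in> F.span (f ` I)" shows "\<exists>c. x = comb I c f"
proof -
  have "F.subspace {comb I c f | c. True}"
  proof (rule F.subspaceI)
    show "0 \<in> {comb I c f | c. True}"
      by (rule CollectI, rule exI[of _ "\<lambda>_. 0"]) (simp add: comb_def fun_eq_iff)
  next
    fix x y assume "x \<in> {comb I c f | c. True}" "y \<in> {comb I c f | c. True}"
    then obtain c c' where "x = comb I c f" "y = comb I c' f" by auto
    then show "x + y \<in> {comb I c f | c. True}"
      by (intro CollectI exI[of _ "\<lambda>t. c t + c' t"]) (simp add: comb_def fun_eq_iff sum.distrib algebra_simps)
  next
    fix r x assume "x \<in> {comb I c f | c. True}"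
    then obtain c where "x = comb I c f" by auto
    then show "scaleF r x \<in> {comb I c f | c. True}"
      by (intro CollectI exI[of _ "\<lambda>t. r * c t"]) (simp add: comb_def scaleF_def fun_eq_iff sum_distrib_left algebra_simps)
  qed
  moreover have "f ` I \<subseteq> {comb I c f | c. True}"
  proof
    fix x assume "x \<in> f ` I"
    then obtain t where t: "t \<in> I" "x = f t" by auto
    show "x \<in> {comb I c f | c. True}"
    proof (intro CollectI exI[of _ "\<lambda>s. if s = t then 1 else 0"] conjI TrueI)
      have "(\<Sum>s\<in>I. (if s = t then 1 else 0) * f s k) = f t k" for k
      proof -
        have "(\<Sum>s\<in>I. (if s = t then 1 else 0) * f s k) = (\<Sum>s\<in>I. if s = t then f s k else 0)"
          by (rule sum.cong) auto
        also have "\<dots> = f t k" using t assms(1) by simp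
        finally show ?thesis .
      qed
      then show "x = comb I (\<lambda>s. if s = t then 1 else 0) f" using t by (simp add: comb_def fun_eq_iff)
    qed
  qed
  ultimately have "F.span (f ` I) \<subseteq> {comb I c f | c. True}" by (rule F.span_minimal[rotated])
  with assms(2) show ?thesis by auto
qed

lemma dim_le_dim: assumes "X \<subseteq> F.span W" "finite W" shows "F.dim X \<le> F.dim W"
proof -
  obtain B where B: "B \<subseteq> W" "F.independent B" "W \<subseteq> F.span B" "card B = F.dim W"
    by (rule F.basis_exists)
  have "F.span W \<subseteq> F.span B" using B(3) by (rule F.span_minimal) simp
  then have "X \<subseteq> F.span B" using assms(1) by auto
  moreover have "finite B" using B(1) assms(2) finite_subset by auto
  ultimately show ?thesis using F.dim_le_card[of X B] B(4) by auto
qed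

lemma dim_union_le: assumes "X \<subseteq> F.span (A \<union> B)" "finite A" "finite B"
  shows "F.dim X \<le> F.dim A + F.dim B"
proof -
  obtain BA where BA: "BA \<subseteq> A" "F.independent BA" "A \<subseteq> F.span BA" "card BA = F.dim A"
    by (rule F.basis_exists)
  obtain BB where BB: "BB \<subseteq> B" "F.independent BB" "B \<subseteq> F.span BB" "card BB = F.dim B"
    by (rule F.basis_exists)
  have fin: "finite BA" "finite BB" using BA(1) BB(1) assms(2,3) by (auto intro: finite_subset)
  have "A \<union> B \<subseteq> F.span (BA \<union> BB)"
    using BA(3) BB(3) F.span_mono[of BA "BA \<union> BB"] F.span_mono[of BB "BA \<union> BB"] by auto
  then have "F.span (A \<union> B) \<subseteq> F.span (BA \<union> BB)"
    by (simp add: F.span_minimal)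
  then have "X \<subseteq> F.span (BA \<union> BB)" using assms(1) by auto
  then have "F.dim X \<le> card (BA \<union> BB)" using F.dim_le_card fin by auto
  also have "\<dots> \<le> card BA + card BB" by (rule card_Un_le)
  finally show ?thesis using BA(4) BB(4) by simp
qed

lemma indep_card_le_dim: assumes "F.independent S" "S \<subseteq> F.span W" "finite W"
  shows "card S \<le> F.dim W"
proof -
  obtain B where B: "B \<subseteq> W" "F.independent B" "W \<subseteq> F.span B" "card B = F.dim W"
    by (rule F.basis_exists)
  have "F.span W \<subseteq> F.span B" using B(3) by (rule F.span_minimal) simp
  then have "S \<subseteq> F.span B" using assms(2) by auto
  moreover have "finite B" using B(1) assms(3) finite_subset by auto
  ultimately show ?thesis using F.independent_span_bound[of B S] assms(1) B(4) by auto
qed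

lemma span_eq_by_dim: assumes "S \<subseteq> F.span T" "finite T" "finite S" "F.dim T \<le> F.dim S"
  shows "T \<subseteq> F.span S"
proof
  fix t assume t: "t \<in> T"
  obtain B where B: "B \<subseteq> S" "F.independent B" "S \<subseteq> F.span B" "card B = F.dim S"
    by (rule F.basis_exists)
  have fB: "finite B" using B(1) assms(3) finite_subset by auto
  show "t \<in> F.span S"
  proof (rule ccontr)
    assume nt: "t \<notin> F.span S"
    then have "t \<notin> F.span B" using F.span_mono[OF B(1)] by auto
    then have ind: "F.independent (insert t B)" using F.independent_insertI B(2) by auto
    have "insert t B \<subseteq> F.span T" using t B(1) assms(1) F.span_base by auto
    then have "card (insert t B) \<le> F.dim T" using indep_card_le_dim ind assms(2) by auto
    moreover have "t \<notin> B" using nt B(1) F.span_base by auto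
    ultimately show False using fB B(4) assms(4) by simp
  qed
qed

definition ev :: "nat \<Rightarrow> nat \<Rightarrow> real" where "ev j = (\<lambda>k. if k = j then 1 else 0)"
definition trunc :: "nat \<Rightarrow> (nat \<Rightarrow> real) \<Rightarrow> nat \<Rightarrow> real" where
  "trunc n x = (\<lambda>k. if k < n then x k else 0)"
definition Tsh :: "nat \<Rightarrow> (nat \<Rightarrow> real) \<Rightarrow> nat \<Rightarrow> real" where
  "Tsh n x = (\<lambda>k. x (k + n))"
definition Ush :: "nat \<Rightarrow> (nat \<Rightarrow> real) \<Rightarrow> nat \<Rightarrow> real" where
  "Ush n x = (\<lambda>k. if k < n then 0 else x (k - n))"

lemma trunc_in_span: "trunc n x \<in> F.span (ev ` {..<n})"
proof -
  have "trunc n x = comb {..<n} x ev"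
  proof
    fix k
    have "(\<Sum>j<n. x j * ev j k) = (\<Sum>j<n. if j = k then x k else 0)"
      by (rule sum.cong) (auto simp: ev_def)
    then show "trunc n x k = comb {..<n} x ev k" by (simp add: comb_def trunc_def)
  qed
  then show ?thesis using comb_in_span[of "{..<n}" x ev] by simp
qed

lemma dim_supported: assumes "\<forall>x\<in>X. \<forall>k\<ge>n. x k = 0" shows "F.dim X \<le> n"
proof -
  have "X \<subseteq> F.span (ev ` {..<n})"
  proof
    fix x assume "x \<in> X"
    then have "trunc n x = x" using assms by (auto simp: trunc_def fun_eq_iff)
    then show "x \<in> F.span (ev ` {..<n})" using trunc_in_span[of n x] by simp
  qed
  then have "F.dim X \<le> card (ev ` {..<n})" by (rule F.dim_le_card) simp
  also have "\<dots> \<le> n" using card_image_le[of "{..<n}" ev] by simp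
  finally show ?thesis .
qed

lemma dim_Ush_le: assumes "finite Y" shows "F.dim (Ush n ` Y) \<le> F.dim Y"
proof -
  obtain B where B: "B \<subseteq> Y" "F.independent B" "Y \<subseteq> F.span B" "card B = F.dim Y"
    by (rule F.basis_exists)
  have fB: "finite B" using B(1) assms by (rule finite_subset)
  have "Ush n ` Y \<subseteq> F.span (Ush n ` B)"
  proof
    fix z assume "z \<in> Ush n ` Y"
    then obtain y where y: "y \<in> Y" "z = Ush n y" by auto
    then have "y \<in> F.span (id ` B)" using B(3) by auto
    then obtain c where c: "y = comb B c id" using span_comb[OF fB] by blast
    have "z = comb B c (Ush n)"
      using y c by (simp add: comb_def Ush_def fun_eq_iff)
    then show "z \<in> F.span (Ush n ` B)" using comb_in_span[OF fB] by simp
  qed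
  then have "F.dim (Ush n ` Y) \<le> card (Ush n ` B)" using fB by (intro F.dim_le_card) auto
  also have "\<dots> \<le> card B" by (rule card_image_le[OF fB])
  finally show ?thesis using B(4) by simp
qed

lemma dim_upper_shift: assumes "finite S" shows "F.dim S \<le> n + F.dim (Tsh n ` S)"
proof -
  have "S \<subseteq> F.span (ev ` {..<n} \<union> Ush n ` (Tsh n ` S))"
  proof
    fix x assume x: "x \<in> S"
    have eq: "x = trunc n x + Ush n (Tsh n x)"
      by (simp add: fun_eq_iff trunc_def Ush_def Tsh_def)
    have "trunc n x \<in> F.span (ev ` {..<n} \<union> Ush n ` (Tsh n ` S))"
      using trunc_in_span F.span_mono[of "ev ` {..<n}"] by blast
    moreover have "Ush n (Tsh n x) \<in> F.span (ev ` {..<n} \<union> Ush n ` (Tsh n ` S))"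
      using x by (intro F.span_base) auto
    ultimately show "x \<in> F.span (ev ` {..<n} \<union> Ush n ` (Tsh n ` S))"
      by (subst eq) (rule F.span_add)
  qed
  then have "F.dim S \<le> F.dim (ev ` {..<n}) + F.dim (Ush n ` (Tsh n ` S))"
    using assms by (intro dim_union_le) auto
  also have "F.dim (ev ` {..<n}) \<le> n"
    by (rule dim_supported) (auto simp: ev_def)
  also have "F.dim (Ush n ` (Tsh n ` S)) \<le> F.dim (Tsh n ` S)"
    using assms by (intro dim_Ush_le) auto
  finally show ?thesis by simp
qed

lemma Tsh_sum: "Tsh n (\<Sum>x\<in>X. scaleF (f x) (g x)) = (\<Sum>x\<in>X. scaleF (f x) (Tsh n (g x)))"
  by (simp add: Tsh_def fun_eq_iff sum_fun_apply scaleF_def)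

lemma indep_zero: assumes "F.independent A" "finite T" "T \<subseteq> A" "(\<Sum>v\<in>T. scaleF (u v) v) = 0" "v \<in> T"
  shows "u v = 0"
  using assms F.independent_explicit_finite_subsets by blast

lemma dim_lower_shift:
  assumes fS: "finite S" and S0: "S0 \<subseteq> S" and kill: "\<forall>x\<in>S0. Tsh n x = 0"
  shows "F.dim S0 + F.dim (Tsh n ` S) \<le> F.dim S"
proof -
  obtain B0 where B0: "B0 \<subseteq> S0" "F.independent B0" "S0 \<subseteq> F.span B0" "card B0 = F.dim S0"
    by (rule F.basis_exists)
  obtain C where C: "C \<subseteq> Tsh n ` S" "F.independent C" "Tsh n ` S \<subseteq> F.span C" "card C = F.dim (Tsh n ` S)"
    by (rule F.basis_exists)
  have fB0: "finite B0" using B0(1) S0 fS by (auto intro: finite_subset)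
  have fC: "finite C" using C(1) fS by (auto intro: finite_subset)
  define g where "g c = (SOME x. x \<in> S \<and> Tsh n x = c)" for c
  have g: "g c \<in> S \<and> Tsh n (g c) = c" if "c \<in> C" for c
  proof -
    from that C(1) obtain x where "x \<in> S" "Tsh n x = c" by auto
    then have "x \<in> S \<and> Tsh n x = c" by simp
    from someI[where P="\<lambda>y. y \<in> S \<and> Tsh n y = c", OF this] show ?thesis unfolding g_def .
  qed
  have injg: "inj_on g C"
  proof (rule inj_onI)
    fix x y assume "x \<in> C" "y \<in> C" "g x = g y"
    then show "x = y" using g[of x] g[of y] by metis
  qed
  have C0: "0 \<notin> C" using C(2) F.dependent_zero by blast
  have disj: "B0 \<inter> g ` C = {}"
  proof (rule ccontr)
    assume "B0 \<inter> g ` C \<noteq> {}"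
    then obtain c where c: "c \<in> C" "g c \<in> B0" by auto
    then have "Tsh n (g c) = 0" using kill B0(1) by auto
    then show False using g[OF c(1)] C0 c(1) by simp
  qed
  have indep: "F.independent (B0 \<union> g ` C)"
  proof (rule F.independent_if_scalars_zero)
    show "finite (B0 \<union> g ` C)" using fB0 fC by simp
  next
    fix f x assume sum0: "(\<Sum>x\<in>B0 \<union> g ` C. scaleF (f x) x) = 0" and x: "x \<in> B0 \<union> g ` C"
    have split: "(\<Sum>x\<in>B0 \<union> g ` C. scaleF (f x) x) = (\<Sum>x\<in>B0. scaleF (f x) x) + (\<Sum>x\<in>g ` C. scaleF (f x) x)"
      using fB0 fC disj by (intro sum.union_disjoint) auto
    have "\<forall>x\<in>B0. scaleF (f x) (Tsh n x) = 0"
    proof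
      fix x assume "x \<in> B0"
      then have "Tsh n x = 0" using kill B0(1) by blast
      then show "scaleF (f x) (Tsh n x) = 0" by (simp add: scaleF_def fun_eq_iff)
    qed
    then have T0: "Tsh n (\<Sum>x\<in>B0. scaleF (f x) x) = 0"
      unfolding Tsh_sum by (intro sum.neutral) blast
    have "Tsh n (\<Sum>x\<in>g ` C. scaleF (f x) x) = (\<Sum>x\<in>g ` C. scaleF (f x) (Tsh n x))"
      by (rule Tsh_sum)
    also have "\<dots> = (\<Sum>c\<in>C. scaleF (f (g c)) (Tsh n (g c)))"
      using injg by (simp add: sum.reindex)
    also have "\<dots> = (\<Sum>c\<in>C. scaleF (f (g c)) c)"
      using g by (intro sum.cong) auto
    finally have eqT: "Tsh n (\<Sum>x\<in>g ` C. scaleF (f x) x) = (\<Sum>c\<in>C. scaleF (f (g c)) c)" .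
    have "Tsh n (\<Sum>x\<in>B0 \<union> g ` C. scaleF (f x) x) = 0"
      using sum0 by (simp add: Tsh_def fun_eq_iff)
    then have "(\<Sum>c\<in>C. scaleF (f (g c)) c) = 0"
      unfolding split eqT[symmetric] using T0 by (simp add: Tsh_def fun_eq_iff)
    then have fgC: "f (g c) = 0" if "c \<in> C" for c
      using indep_zero[OF C(2) fC subset_refl, of "\<lambda>c. f (g c)"] that by blast
    have "(\<Sum>x\<in>g ` C. scaleF (f x) x) = 0"
      using fgC by (intro sum.neutral) (auto simp: scaleF_def fun_eq_iff)
    then have "(\<Sum>x\<in>B0. scaleF (f x) x) = 0" using sum0 split by simp
    then have "f x = 0" if "x \<in> B0"
      using indep_zero[OF B0(2) fB0 subset_refl, of f] that by blast
    then show "f x = 0" using x fgC by auto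
  qed
  have "B0 \<union> g ` C \<subseteq> F.span S"
    using B0(1) S0 g by (auto intro: F.span_base)
  then have "card (B0 \<union> g ` C) \<le> F.dim S"
    using indep_card_le_dim[OF indep _ fS] by simp
  moreover have "card (B0 \<union> g ` C) = card B0 + card C"
    using fB0 fC disj injg by (simp add: card_Un_disjoint card_image)
  ultimately show ?thesis using B0(4) C(4) by simp
qed


definition ip :: "nat \<Rightarrow> (nat \<Rightarrow> real) \<Rightarrow> (nat \<Rightarrow> real) \<Rightarrow> real" where
  "ip D x y = (\<Sum>k<D. x k * y k)"

lemma sqd_ip: "sqd D x y = ip D (x - y) (x - y)"
  by (simp add: sqd_def ip_def power2_eq_square)

lemma sqd_sym: "sqd D x y = sqd D y x"
  by (simp add: sqd_def power2_commute)

lemma sqd_self[simp]: "sqd D x x = 0"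
  by (simp add: sqd_def)

lemma ip_sym: "ip D x y = ip D y x"
  by (simp add: ip_def mult.commute)

lemma polar: "2 * ip D (x - y) (u - v) = sqd D x v + sqd D y u - sqd D x u - sqd D y v"
proof -
  have "sqd D x v + sqd D y u - sqd D x u - sqd D y v
     = (\<Sum>k<D. (x k - v k)^2 + (y k - u k)^2 - (x k - u k)^2 - (y k - v k)^2)"
    by (simp add: sqd_def sum.distrib sum_subtractf)
  also have "\<dots> = (\<Sum>k<D. 2 * ((x k - y k) * (u k - v k)))"
    by (rule sum.cong) (auto simp: power2_eq_square algebra_simps)
  also have "\<dots> = 2 * ip D (x - y) (u - v)"
    by (simp add: ip_def sum_distrib_left)
  finally show ?thesis by simp
qed

lemma ip_diff_left: "ip D (x - y) z = ip D x z - ip D y z"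
  by (simp add: ip_def sum_subtractf left_diff_distrib)

lemma ip_diff_right: "ip D z (x - y) = ip D z x - ip D z y"
  by (simp add: ip_def sum_subtractf right_diff_distrib)

lemma ip_add_left: "ip D (x + y) z = ip D x z + ip D y z"
  by (simp add: ip_def sum.distrib distrib_right)

lemma ip_comb_left: "ip D (comb I c f) y = (\<Sum>t\<in>I. c t * ip D (f t) y)"
proof -
  have "ip D (comb I c f) y = (\<Sum>k<D. \<Sum>t\<in>I. c t * f t k * y k)"
    by (simp add: ip_def comb_def sum_distrib_right)
  also have "\<dots> = (\<Sum>t\<in>I. \<Sum>k<D. c t * f t k * y k)" by (rule sum.swap)
  also have "\<dots> = (\<Sum>t\<in>I. c t * ip D (f t) y)"
    by (simp add: ip_def sum_distrib_left mult.assoc)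
  finally show ?thesis .
qed

lemma ip_comb_right: "ip D y (comb I c f) = (\<Sum>t\<in>I. c t * ip D y (f t))"
  using ip_comb_left[of D I c f y] by (simp add: ip_sym)

lemma ip_transfer1:
  assumes "\<forall>s\<in>J. ip D1 x (G s) = ip D2 x' (G' s)"
  shows "ip D1 x (comb J c G) = ip D2 x' (comb J c G')"
  using assms by (simp add: ip_comb_right)

lemma ip_transfer2:
  assumes "\<forall>t\<in>I. \<forall>s\<in>J. ip D1 (F t) (G s) = ip D2 (F' t) (G' s)"
  shows "ip D1 (comb I c F) (comb J c' G) = ip D2 (comb I c F') (comb J c' G')"
  using assms by (simp add: ip_comb_left ip_comb_right)

lemma comb_diff: "comb I c f - comb I c' f = comb I (\<lambda>t. c t - c' t) f"
  by (simp add: comb_def fun_eq_iff sum_subtractf left_diff_distrib)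

lemma ip_self_zero: assumes "ip D x x = 0" "k < D" shows "x k = 0"
proof -
  have "(\<Sum>j<D. x j * x j) = 0" using assms(1) by (simp add: ip_def)
  then have "\<forall>j\<in>{..<D}. x j * x j = 0"
    by (subst sum_nonneg_eq_0_iff[symmetric]) auto
  then show ?thesis using assms(2) by auto
qed

lemma sum_split_add: "(\<Sum>k<(a::nat)+b. f k) = (\<Sum>k<a. f k) + (\<Sum>k<b. f (k + a))"
  by (induction b) (auto simp: add.commute add.left_commute)

definition glue :: "nat \<Rightarrow> (nat \<Rightarrow> real) \<Rightarrow> (nat \<Rightarrow> real) \<Rightarrow> nat \<Rightarrow> real" where
  "glue a x y = (\<lambda>k. if k < a then x k else y (k - a))"

lemma sqd_split: "sqd (a+b) x y = sqd a x y + sqd b (Tsh a x) (Tsh a y)"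
  by (simp add: sqd_def sum_split_add Tsh_def)

lemma sqd_glue: "sqd (a+b) (glue a x y) (glue a x' y') = sqd a x x' + sqd b y y'"
proof -
  have "sqd a (glue a x y) (glue a x' y') = sqd a x x'"
    by (simp add: sqd_def glue_def)
  moreover have "Tsh a (glue a x y) = y" "Tsh a (glue a x' y') = y'"
    by (auto simp: Tsh_def glue_def fun_eq_iff)
  ultimately show ?thesis by (simp add: sqd_split)
qed

lemma Tsh_glue[simp]: "Tsh a (glue a x y) = y"
  by (auto simp: Tsh_def glue_def fun_eq_iff)

lemma sqd_transl: "sqd D (x - z) (y - z) = sqd D x y"
  by (simp add: sqd_def)



definition pd :: "('v \<Rightarrow> nat \<Rightarrow> real) \<Rightarrow> 'v \<times> 'v \<Rightarrow> nat \<Rightarrow> real" where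
  "pd q = (\<lambda>(a,b). q a - q b)"

lemma DS_image: "{q i - q j | i j. i \<in> X \<and> j \<in> X} = pd q ` (X \<times> X)"
  by (auto simp: pd_def)

lemma affdim_eq: "X \<noteq> {} \<Longrightarrow> affdim X q = int (F.dim (pd q ` (X \<times> X)))"
  by (simp add: affdim_def DS_image)

lemma ip_eq_vanish: "(\<forall>t<D. x t = y t) \<Longrightarrow> ip D z x = ip D z y"
  by (simp add: ip_def)

lemma ip_expand: "ip D (x - y) (x - y) = ip D x x - 2 * ip D x y + ip D y y"
  by (simp add: ip_diff_left ip_diff_right ip_sym[of D y x])

lemma transfer_zero:
  assumes H: "\<forall>a\<in>K. \<forall>b\<in>K. \<forall>c\<in>K. \<forall>e\<in>K. ip D1 (q a - q b) (q c - q e) = ip D2 (p a - p b) (p c - p e)"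
    and I: "I \<subseteq> K \<times> K" and kl: "k \<in> K" "l \<in> K"
    and eq: "p k - p l = comb I \<gamma> (pd p)"
    and t: "t < D1"
  shows "(q k - q l - comb I \<gamma> (pd q)) t = 0"
proof -
  have h1: "\<forall>s\<in>I. ip D1 (q k - q l) (pd q s) = ip D2 (p k - p l) (pd p s)"
    using H I kl by (auto simp: pd_def)
  have h2: "\<forall>s\<in>I. \<forall>s'\<in>I. ip D1 (pd q s) (pd q s') = ip D2 (pd p s) (pd p s')"
    using H I by (fastforce simp: pd_def)
  have "ip D1 (q k - q l - comb I \<gamma> (pd q)) (q k - q l - comb I \<gamma> (pd q))
      = ip D2 (p k - p l - comb I \<gamma> (pd p)) (p k - p l - comb I \<gamma> (pd p))"
  proof -
    have e1: "ip D1 (q k - q l) (q k - q l) = ip D2 (p k - p l) (p k - p l)" using H kl by blast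
    note e2 = ip_transfer1[OF h1, of \<gamma>] and e3 = ip_transfer2[OF h2, of \<gamma> \<gamma>]
    show ?thesis
      unfolding ip_expand[of D1 "q k - q l" "comb I \<gamma> (pd q)"] ip_expand[of D2 "p k - p l" "comb I \<gamma> (pd p)"]
      by (simp only: e1 e2 e3)
  qed
  also have "\<dots> = 0" using eq by (simp add: ip_def)
  finally show ?thesis using ip_self_zero t by blast
qed


lemma ip_from_sqd:
  assumes "sqd D1 (q a) (q e) = sqd D2 (p a) (p e)" "sqd D1 (q b) (q c) = sqd D2 (p b) (p c)"
    "sqd D1 (q a) (q c) = sqd D2 (p a) (p c)" "sqd D1 (q b) (q e) = sqd D2 (p b) (p e)"
  shows "ip D1 (q a - q b) (q c - q e) = ip D2 (p a - p b) (p c - p e)"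
  using polar[of D1 "q a" "q b" "q c" "q e"] polar[of D2 "p a" "p b" "p c" "p e"] assms by simp

lemma ip_trunc1: assumes "n \<le> D" shows "ip D x (trunc n x) = ip n x x"
proof -
  have "ip D x (trunc n x) = (\<Sum>k<n + (D - n). x k * trunc n x k)" using assms by (simp add: ip_def)
  also have "\<dots> = ip n x x" by (simp add: sum_split_add trunc_def ip_def)
  finally show ?thesis .
qed

lemma ip_trunc2: assumes "n \<le> D" shows "ip D (trunc n x) (trunc n x) = ip n x x"
proof -
  have "ip D (trunc n x) (trunc n x) = (\<Sum>k<n + (D - n). trunc n x k * trunc n x k)" using assms by (simp add: ip_def)
  also have "\<dots> = ip n x x" by (simp add: sum_split_add trunc_def ip_def)
  finally show ?thesis .
qed

locale setting =
  fixes V Vt :: "'v set" and E :: "('v \<times> 'v) set"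
    and d dt :: nat and p :: "'v \<Rightarrow> nat \<Rightarrow> real" and p0 :: "nat \<Rightarrow> real"
  assumes finV: "finite V"
    and edges: "E \<subseteq> V \<times> V" and symE: "sym E" and irrE: "\<forall>i. (i,i) \<notin> E"
    and p_space: "in_space d V p"
    and p_dim: "affdim V p = int d"
    and Vt_sub: "Vt \<subseteq> V"
    and Vt_ur: "universally_rigid Vt (induced E Vt) d p"
    and Vt_dim: "affdim Vt p = int dt"
    and dt_less: "dt < d"
    and nbrs: "\<forall>i \<in> V - Vt. affdim (neighbours E i \<inter> Vt) p = int dt"
    and p0_space: "\<forall>k\<ge>d - dt. p0 k = 0"
    and coords: "\<forall>i\<in>Vt. \<forall>k. dt \<le> k \<and> k < d \<longrightarrow> p i k = p0 (k - dt)"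
begin

definition "W = V - Vt"
definition "cmap i = (if i \<in> Vt then None else Some i)"
definition "pc = cone_config p0 (\<lambda>i. proj2 d dt (p i))"
definition "CV = cone_vertices W"
definition "CE = cone_edges W (induced E W)"
definition "r = (SOME r. r \<in> Vt)"
definition "Ap = pd p ` (Vt \<times> Vt)"

lemma Vt_ne: "Vt \<noteq> {}"
  using Vt_dim by (auto simp: affdim_def)

lemma r_in: "r \<in> Vt"
  unfolding r_def using Vt_ne by (simp add: some_in_eq)

lemma finVt: "finite Vt" using Vt_sub finV by (rule finite_subset)

lemma finW: "finite W" using finV by (simp add: W_def)

lemma dim_Ap: "F.dim Ap = dt"
  using Vt_dim Vt_ne by (simp add: affdim_eq Ap_def)

lemma finAp: "finite Ap" using finVt by (simp add: Ap_def)

lemma p_zero: "i \<in> V \<Longrightarrow> d \<le> k \<Longrightarrow> p i k = 0"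
  using p_space by (simp add: in_space_def)

lemma Ap_supp: "x \<in> Ap \<Longrightarrow> dt \<le> k \<Longrightarrow> x k = 0"
proof -
  assume "x \<in> Ap" "dt \<le> k"
  then obtain a b where ab: "a \<in> Vt" "b \<in> Vt" "x = p a - p b" by (auto simp: Ap_def pd_def)
  show "x k = 0"
  proof (cases "k < d")
    case True then show ?thesis using ab coords \<open>dt \<le> k\<close> by simp
  next
    case False
    then have "p a k = 0" "p b k = 0" using ab p_zero Vt_sub by auto
    then show ?thesis using ab by simp
  qed
qed

lemma Tsh_p: "i \<in> V \<Longrightarrow> Tsh dt (p i) = pc (cmap i)"
proof -
  assume iV: "i \<in> V"
  show ?thesis
  proof (cases "i \<in> Vt")
    case True
    have "p i (k + dt) = p0 k" for k
    proof (cases "k < d - dt")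
      case True then show ?thesis using coords \<open>i \<in> Vt\<close> by auto
    next
      case False then show ?thesis using p_zero[OF iV] p0_space by auto
    qed
    then show ?thesis using True by (simp add: Tsh_def pc_def cmap_def cone_config_def fun_eq_iff)
  next
    case False
    have "p i (k + dt) = (if k < d - dt then p i (k + dt) else 0)" for k
      using p_zero[OF iV] by auto
    then show ?thesis using False by (simp add: Tsh_def pc_def cmap_def cone_config_def proj2_def fun_eq_iff)
  qed
qed

lemma d_split: "d = dt + (d - dt)" using dt_less by simp

lemma sqd_p: "i \<in> V \<Longrightarrow> j \<in> V \<Longrightarrow>
   sqd d (p i) (p j) = sqd dt (p i) (p j) + sqd (d - dt) (pc (cmap i)) (pc (cmap j))"
  using sqd_split[of dt "d - dt" "p i" "p j"] d_split Tsh_p by simp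

lemma cmap_in: "i \<in> V \<Longrightarrow> cmap i \<in> CV"
  by (auto simp: cmap_def CV_def cone_vertices_def W_def)

lemma CV_cmap: "x \<in> CV \<Longrightarrow> \<exists>i\<in>V. x = cmap i"
proof -
  assume "x \<in> CV"
  then show ?thesis
  proof (cases x)
    case None then show ?thesis using r_in Vt_sub by (intro bexI[of _ r]) (auto simp: cmap_def)
  next
    case (Some i) then show ?thesis using \<open>x \<in> CV\<close>
      by (intro bexI[of _ i]) (auto simp: cmap_def CV_def cone_vertices_def W_def)
  qed
qed

lemma None_CV: "None \<in> CV" by (simp add: CV_def cone_vertices_def)

lemma CV_ne: "CV \<noteq> {}" using None_CV by auto

lemma finCV: "finite CV" using finW by (simp add: CV_def cone_vertices_def)

lemma cone_diffs: "pd f ` (CV \<times> CV) = pd (\<lambda>i. f (cmap i)) ` (V \<times> V)"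
proof
  show "pd f ` (CV \<times> CV) \<subseteq> pd (\<lambda>i. f (cmap i)) ` (V \<times> V)"
  proof
    fix z assume "z \<in> pd f ` (CV \<times> CV)"
    then obtain x y where xy: "x \<in> CV" "y \<in> CV" "z = f x - f y" by (auto simp: pd_def)
    then obtain i j where "i \<in> V" "j \<in> V" "x = cmap i" "y = cmap j" using CV_cmap by metis
    then show "z \<in> pd (\<lambda>i. f (cmap i)) ` (V \<times> V)" using xy by (auto simp: pd_def image_iff)
  qed
next
  show "pd (\<lambda>i. f (cmap i)) ` (V \<times> V) \<subseteq> pd f ` (CV \<times> CV)"
    using cmap_in by (force simp: pd_def image_iff)
qed

lemma edge_cone: "(i,j) \<in> E \<Longrightarrow> cmap i = cmap j \<or> (cmap i, cmap j) \<in> CE"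
  using edges by (auto simp: cmap_def CE_def cone_edges_def induced_def W_def)

lemma V_ne: "V \<noteq> {}" using Vt_ne Vt_sub by auto

lemma Tsh_diff: "Tsh n (x - y) = Tsh n x - Tsh n y"
  by (simp add: Tsh_def fun_eq_iff)

lemma lift:
  assumes eq: "equivalent_fw CV CE (d - dt) pc D' q'"
  shows "equivalent_fw V E d p (dt + D') (\<lambda>i. glue dt (p i) (q' (cmap i) - q' None))"
    and "i \<in> V \<Longrightarrow> j \<in> V \<Longrightarrow> sqd (dt + D') (glue dt (p i) (q' (cmap i) - q' None)) (glue dt (p j) (q' (cmap j) - q' None))
          = sqd dt (p i) (p j) + sqd D' (q' (cmap i)) (q' (cmap j))"
proof -
  show sq: "sqd (dt + D') (glue dt (p i) (q' (cmap i) - q' None)) (glue dt (p j) (q' (cmap j) - q' None))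
          = sqd dt (p i) (p j) + sqd D' (q' (cmap i)) (q' (cmap j))" for i j
    by (simp add: sqd_glue sqd_transl)
  have sp: "in_space D' CV q'" and ed: "\<forall>(x,y)\<in>CE. sqd D' (q' x) (q' y) = sqd (d - dt) (pc x) (pc y)"
    using eq by (auto simp: equivalent_fw_def)
  show "equivalent_fw V E d p (dt + D') (\<lambda>i. glue dt (p i) (q' (cmap i) - q' None))"
    unfolding equivalent_fw_def
  proof (intro conjI)
    show "in_space (dt + D') V (\<lambda>i. glue dt (p i) (q' (cmap i) - q' None))"
      unfolding in_space_def
    proof (intro ballI allI impI)
      fix i k assume "i \<in> V" "dt + D' \<le> k"
      then have "q' (cmap i) (k - dt) = 0" "q' None (k - dt) = 0"
        using sp cmap_in None_CV by (auto simp: in_space_def)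
      then show "glue dt (p i) (q' (cmap i) - q' None) k = 0"
        using \<open>dt + D' \<le> k\<close> by (simp add: glue_def)
    qed
  next
    show "\<forall>(i,j)\<in>E. sqd (dt + D') (glue dt (p i) (q' (cmap i) - q' None)) (glue dt (p j) (q' (cmap j) - q' None)) = sqd d (p i) (p j)"
    proof (clarify)
      fix i j assume ij: "(i,j) \<in> E"
      then have V: "i \<in> V" "j \<in> V" using edges by auto
      have "sqd D' (q' (cmap i)) (q' (cmap j)) = sqd (d - dt) (pc (cmap i)) (pc (cmap j))"
        using edge_cone[OF ij] ed by auto
      then show "sqd (dt + D') (glue dt (p i) (q' (cmap i) - q' None)) (glue dt (p j) (q' (cmap j) - q' None)) = sqd d (p i) (p j)"
        using sq sqd_p[OF V] by simp
    qed
  qed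
qed

lemma ur_fwd:
  assumes ur: "universally_rigid V E d p" shows "universally_rigid CV CE (d - dt) pc"
  unfolding universally_rigid_def
proof (intro allI impI ballI)
  fix D' q' x y assume eq: "equivalent_fw CV CE (d - dt) pc D' q'" and xy: "x \<in> CV" "y \<in> CV"
  obtain i j where ij: "i \<in> V" "j \<in> V" "x = cmap i" "y = cmap j" using CV_cmap xy by metis
  have "sqd (dt + D') (glue dt (p i) (q' (cmap i) - q' None)) (glue dt (p j) (q' (cmap j) - q' None)) = sqd d (p i) (p j)"
    using ur lift(1)[OF eq] ij(1,2) unfolding universally_rigid_def by blast
  then show "sqd D' (q' x) (q' y) = sqd (d - dt) (pc x) (pc y)"
    using lift(2)[OF eq ij(1,2)] sqd_p[OF ij(1,2)] ij(3,4) by simp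
qed

lemma dim_cone_p: "d \<le> dt + F.dim (pd pc ` (CV \<times> CV))"
proof -
  have "Tsh dt ` (pd p ` (V \<times> V)) = pd (\<lambda>i. pc (cmap i)) ` (V \<times> V)"
    unfolding image_comp by (rule image_cong) (auto simp: pd_def Tsh_diff Tsh_p)
  then have "Tsh dt ` (pd p ` (V \<times> V)) = pd pc ` (CV \<times> CV)" by (simp add: cone_diffs)
  moreover have "F.dim (pd p ` (V \<times> V)) = d" using p_dim V_ne by (simp add: affdim_eq)
  moreover have "F.dim (pd p ` (V \<times> V)) \<le> dt + F.dim (Tsh dt ` (pd p ` (V \<times> V)))"
    using finV by (intro dim_upper_shift) simp
  ultimately show ?thesis by simp
qed

lemma dr_fwd:
  assumes dr: "dimensionally_rigid V E d p" shows "dimensionally_rigid CV CE (d - dt) pc"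
  unfolding dimensionally_rigid_def
proof (intro allI impI)
  fix D' q' assume eq: "equivalent_fw CV CE (d - dt) pc D' q'"
  define Q where "Q = (\<lambda>i. glue dt (p i) (q' (cmap i) - q' None))"
  have "affdim V Q \<le> affdim V p" using dr lift(1)[OF eq] unfolding dimensionally_rigid_def Q_def by blast
  then have dQ: "F.dim (pd Q ` (V \<times> V)) \<le> d" using p_dim V_ne by (simp add: affdim_eq)
  have QVt: "Q a - Q b = p a - p b" if "a \<in> Vt" "b \<in> Vt" for a b
  proof
    fix k
    have "p a - p b \<in> Ap" using that by (auto simp: Ap_def pd_def)
    then show "(Q a - Q b) k = (p a - p b) k"
      using that Ap_supp[of "p a - p b" k] by (auto simp: Q_def glue_def cmap_def)
  qed
  have S0: "Ap \<subseteq> pd Q ` (V \<times> V)"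
  proof
    fix x assume "x \<in> Ap"
    then obtain a b where "a \<in> Vt" "b \<in> Vt" "x = p a - p b" by (auto simp: Ap_def pd_def)
    then have "x = pd Q (a,b)" "(a,b) \<in> V \<times> V" using QVt Vt_sub by (auto simp: pd_def)
    then show "x \<in> pd Q ` (V \<times> V)" by blast
  qed
  have kill: "\<forall>x\<in>Ap. Tsh dt x = 0"
    using Ap_supp by (auto simp: Tsh_def fun_eq_iff)
  have "Tsh dt ` (pd Q ` (V \<times> V)) = pd (\<lambda>i. q' (cmap i)) ` (V \<times> V)"
    unfolding image_comp by (rule image_cong) (auto simp: pd_def Tsh_diff Q_def)
  then have TQ: "Tsh dt ` (pd Q ` (V \<times> V)) = pd q' ` (CV \<times> CV)" by (simp add: cone_diffs)
  have "F.dim Ap + F.dim (Tsh dt ` (pd Q ` (V \<times> V))) \<le> F.dim (pd Q ` (V \<times> V))"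
    using finV S0 kill by (intro dim_lower_shift) auto
  then have "dt + F.dim (pd q' ` (CV \<times> CV)) \<le> d" using dQ dim_Ap TQ by simp
  then show "affdim CV q' \<le> affdim CV pc"
    using dim_cone_p CV_ne by (simp add: affdim_eq)
qed

definition "cc x = (case x of None \<Rightarrow> r | Some i \<Rightarrow> i)"

lemma cc_V: "x \<in> CV \<Longrightarrow> cc x \<in> V"
  using r_in Vt_sub by (auto simp: cc_def CV_def cone_vertices_def W_def split: option.splits)

lemma cmap_cc: "x \<in> CV \<Longrightarrow> cmap (cc x) = x"
  using r_in by (auto simp: cc_def CV_def cone_vertices_def W_def cmap_def split: option.splits)

lemma CE_CV: "(x,y) \<in> CE \<Longrightarrow> x \<in> CV \<and> y \<in> CV"
  by (auto simp: CE_def cone_edges_def CV_def cone_vertices_def induced_def)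

context
  fixes D' and q :: "'v \<Rightarrow> nat \<Rightarrow> real"
  assumes eqq: "equivalent_fw V E d p D' q"
begin

lemma q_zero: "i \<in> V \<Longrightarrow> D' \<le> k \<Longrightarrow> q i k = 0"
  using eqq by (simp add: equivalent_fw_def in_space_def)

lemma q_edge: "(i,j) \<in> E \<Longrightarrow> sqd D' (q i) (q j) = sqd d (p i) (p j)"
  using eqq by (auto simp: equivalent_fw_def)

lemma hVt: "k \<in> Vt \<Longrightarrow> l \<in> Vt \<Longrightarrow> sqd D' (q k) (q l) = sqd d (p k) (p l)"
proof -
  assume kl: "k \<in> Vt" "l \<in> Vt"
  have "equivalent_fw Vt (induced E Vt) d p D' q"
    using eqq Vt_sub by (auto simp: equivalent_fw_def in_space_def induced_def)
  then show ?thesis using Vt_ur kl unfolding universally_rigid_def by blast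
qed

lemma ipVt: "\<forall>a\<in>Vt. \<forall>b\<in>Vt. \<forall>c\<in>Vt. \<forall>e\<in>Vt. ip D' (q a - q b) (q c - q e) = ip d (p a - p b) (p c - p e)"
  by (intro ballI ip_from_sqd) (simp_all add: hVt)

lemma c1: assumes iV: "i \<in> V" and k: "k \<in> Vt" shows "sqd D' (q i) (q k) = sqd d (p i) (p k)"
proof (cases "i \<in> Vt")
  case True then show ?thesis using hVt k by simp
next
  case False
  define N where "N = neighbours E i \<inter> Vt"
  have "affdim N p = int dt" using nbrs iV False by (simp add: N_def)
  then have Nne: "N \<noteq> {}" by (auto simp: affdim_def split: if_splits)
  then have dN: "F.dim (pd p ` (N \<times> N)) = dt" using \<open>affdim N p = int dt\<close> by (simp add: affdim_eq)
  have NVt: "N \<subseteq> Vt" by (simp add: N_def)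
  have finN: "finite N" using NVt finVt by (rule finite_subset)
  have Nedge: "a \<in> N \<Longrightarrow> (i,a) \<in> E" for a by (simp add: N_def neighbours_def)
  have "Ap \<subseteq> F.span (pd p ` (N \<times> N))"
  proof (rule span_eq_by_dim)
    show "pd p ` (N \<times> N) \<subseteq> F.span Ap" using NVt by (auto simp: Ap_def intro!: F.span_base)
    show "finite Ap" by (rule finAp)
    show "finite (pd p ` (N \<times> N))" using finN by simp
    show "F.dim Ap \<le> F.dim (pd p ` (N \<times> N))" using dN dim_Ap by simp
  qed
  obtain k0 where k0: "k0 \<in> N" using Nne by auto
  have "p k - p k0 \<in> Ap" using k k0 NVt by (auto simp: Ap_def pd_def image_iff)
  then obtain \<gamma> where g: "p k - p k0 = comb (N \<times> N) \<gamma> (pd p)"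
    using span_comb[of "N \<times> N" _ "pd p"] finN \<open>Ap \<subseteq> _\<close> by blast
  have van: "\<forall>t<D'. (q k - q k0) t = comb (N \<times> N) \<gamma> (pd q) t"
  proof (intro allI impI)
    fix t assume "t < D'"
    from transfer_zero[OF ipVt _ k _ g this] NVt k0
    show "(q k - q k0) t = comb (N \<times> N) \<gamma> (pd q) t" by auto
  qed
  have tr: "\<forall>s\<in>N \<times> N. ip D' (q i - q k0) (pd q s) = ip d (p i - p k0) (pd p s)"
  proof
    fix s assume "s \<in> N \<times> N"
    then obtain a b where ab: "s = (a,b)" "a \<in> N" "b \<in> N" by auto
    show "ip D' (q i - q k0) (pd q s) = ip d (p i - p k0) (pd p s)"
    proof -
      have "k0 \<in> Vt" "a \<in> Vt" "b \<in> Vt" using ab(2,3) k0 NVt by auto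
      then show ?thesis
        unfolding ab pd_def using ab(2,3)
        by (auto intro!: ip_from_sqd simp: q_edge Nedge hVt)
    qed
  qed
  have "ip D' (q i - q k0) (q k - q k0) = ip D' (q i - q k0) (comb (N \<times> N) \<gamma> (pd q))"
    by (rule ip_eq_vanish[OF van])
  also have "\<dots> = ip d (p i - p k0) (comb (N \<times> N) \<gamma> (pd p))" by (rule ip_transfer1[OF tr])
  also have "\<dots> = ip d (p i - p k0) (p k - p k0)" using g by simp
  finally have ipik: "ip D' (q i - q k0) (q k - q k0) = ip d (p i - p k0) (p k - p k0)" .
  have e1: "sqd D' (q i) (q k) = ip D' ((q i - q k0) - (q k - q k0)) ((q i - q k0) - (q k - q k0))"
    by (simp add: sqd_ip)
  have e2: "sqd d (p i) (p k) = ip d ((p i - p k0) - (p k - p k0)) ((p i - p k0) - (p k - p k0))"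
    by (simp add: sqd_ip)
  have "ip D' (q i - q k0) (q i - q k0) = ip d (p i - p k0) (p i - p k0)"
    using q_edge[OF Nedge[OF k0]] by (simp add: sqd_ip)
  moreover have "ip D' (q k - q k0) (q k - q k0) = ip d (p k - p k0) (p k - p k0)"
    using hVt[OF k] k0 NVt by (auto simp: sqd_ip)
  ultimately show ?thesis unfolding e1 e2 ip_expand using ipik by simp
qed

lemma ipV: "i \<in> V \<Longrightarrow> j \<in> V \<Longrightarrow> c \<in> Vt \<Longrightarrow> e \<in> Vt \<Longrightarrow>
    ip D' (q i - q j) (q c - q e) = ip d (p i - p j) (p c - p e)"
  by (intro ip_from_sqd) (simp_all add: c1)

lemma ev_span: "ev ` {..<dt} \<subseteq> F.span Ap"
proof (rule span_eq_by_dim)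
  show "Ap \<subseteq> F.span (ev ` {..<dt})"
  proof
    fix x assume "x \<in> Ap"
    then have "trunc dt x = x" using Ap_supp by (auto simp: trunc_def fun_eq_iff)
    then show "x \<in> F.span (ev ` {..<dt})" using trunc_in_span[of dt x] by simp
  qed
  show "finite (ev ` {..<dt})" by simp
  show "finite Ap" by (rule finAp)
  have "F.dim (ev ` {..<dt}) \<le> dt" by (rule dim_supported) (auto simp: ev_def)
  then show "F.dim (ev ` {..<dt}) \<le> F.dim Ap" using dim_Ap by simp
qed

lemma trunc_span: "trunc dt x \<in> F.span Ap"
proof -
  have "F.span (ev ` {..<dt}) \<subseteq> F.span Ap" using ev_span by (rule F.span_minimal) simp
  then show ?thesis using trunc_in_span by blast
qed

lemma construct:
  "\<exists>b. (\<forall>i\<in>V. \<forall>j\<in>V. sqd D' (b i) (b j) = sqd D' (q i) (q j) - sqd dt (p i) (p j))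
     \<and> (\<forall>i\<in>V. \<forall>k\<ge>D'. b i k = 0)
     \<and> (\<forall>i\<in>V. (q i - q r) - (b i - b r) \<in> F.span (pd q ` (Vt \<times> Vt)))"
proof -
  have "\<forall>i. \<exists>g. trunc dt (p i - p r) = comb (Vt \<times> Vt) g (pd p)"
    using trunc_span span_comb[of "Vt \<times> Vt" _ "pd p"] finVt by (auto simp: Ap_def)
  then obtain \<gamma> where g: "\<And>i. trunc dt (p i - p r) = comb (Vt \<times> Vt) (\<gamma> i) (pd p)"
    by metis
  define a where "a i = comb (Vt \<times> Vt) (\<gamma> i) (pd q)" for i
  define b where "b i = (q i - q r) - a i" for i
  have rV: "r \<in> V" using r_in Vt_sub by auto
  have c3: "\<forall>i\<in>V. \<forall>k\<ge>D'. b i k = 0"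
  proof (intro ballI allI impI)
    fix i k assume i: "i \<in> V" and k: "D' \<le> k"
    have z: "\<forall>x\<in>Vt. q x k = 0" using k Vt_sub q_zero by auto
    have "a i k = 0"
      unfolding a_def comb_def using z by (intro sum.neutral) (auto simp: pd_def)
    then show "b i k = 0" using q_zero[OF i k] q_zero[OF rV k] by (simp add: b_def)
  qed
  have c4: "\<forall>i\<in>V. (q i - q r) - (b i - b r) \<in> F.span (pd q ` (Vt \<times> Vt))"
  proof
    fix i assume "i \<in> V"
    have "(q i - q r) - (b i - b r) = a i - a r" by (simp add: b_def fun_eq_iff)
    then show "(q i - q r) - (b i - b r) \<in> F.span (pd q ` (Vt \<times> Vt))"
      unfolding a_def using finVt by (auto intro!: F.span_diff comb_in_span)
  qed
  have c2: "\<forall>i\<in>V. \<forall>j\<in>V. sqd D' (b i) (b j) = sqd D' (q i) (q j) - sqd dt (p i) (p j)"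
  proof (intro ballI)
    fix i j assume i: "i \<in> V" and j: "j \<in> V"
    define \<delta> where "\<delta> t = \<gamma> i t - \<gamma> j t" for t
    have de: "\<delta> = (\<lambda>t. \<gamma> i t - \<gamma> j t)" by (simp add: \<delta>_def fun_eq_iff)
    have dl: "comb (Vt \<times> Vt) \<delta> (pd q) = a i - a j"
      using comb_diff[of "Vt \<times> Vt" "\<gamma> i" "pd q" "\<gamma> j"] by (simp add: a_def de)
    have bd: "b i - b j = (q i - q j) - comb (Vt \<times> Vt) \<delta> (pd q)"
      unfolding dl by (simp add: b_def fun_eq_iff)
    have "comb (Vt \<times> Vt) \<delta> (pd p) = trunc dt (p i - p r) - trunc dt (p j - p r)"
      using comb_diff[of "Vt \<times> Vt" "\<gamma> i" "pd p" "\<gamma> j"] g[of i] g[of j] by (simp add: de)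
    then have cd: "comb (Vt \<times> Vt) \<delta> (pd p) = trunc dt (p i - p j)"
      by (simp add: fun_eq_iff trunc_def)
    have t1: "\<forall>s\<in>Vt \<times> Vt. ip D' (q i - q j) (pd q s) = ip d (p i - p j) (pd p s)"
      using ipV[OF i j] by (auto simp: pd_def)
    have t2: "\<forall>s\<in>Vt \<times> Vt. \<forall>s'\<in>Vt \<times> Vt. ip D' (pd q s) (pd q s') = ip d (pd p s) (pd p s')"
      using ipVt by (auto simp: pd_def)
    have "ip D' (q i - q j) (comb (Vt \<times> Vt) \<delta> (pd q)) = ip d (p i - p j) (trunc dt (p i - p j))"
      using ip_transfer1[OF t1, of \<delta>] cd by simp
    also have "\<dots> = sqd dt (p i) (p j)" using dt_less by (simp add: ip_trunc1 sqd_ip)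
    finally have x1: "ip D' (q i - q j) (comb (Vt \<times> Vt) \<delta> (pd q)) = sqd dt (p i) (p j)" .
    have "ip D' (comb (Vt \<times> Vt) \<delta> (pd q)) (comb (Vt \<times> Vt) \<delta> (pd q)) = ip d (trunc dt (p i - p j)) (trunc dt (p i - p j))"
      using ip_transfer2[OF t2, of \<delta> \<delta>] cd by simp
    also have "\<dots> = sqd dt (p i) (p j)" using dt_less by (simp add: ip_trunc2 sqd_ip)
    finally have x2: "ip D' (comb (Vt \<times> Vt) \<delta> (pd q)) (comb (Vt \<times> Vt) \<delta> (pd q)) = sqd dt (p i) (p j)" .
    have "sqd D' (b i) (b j) = ip D' (b i - b j) (b i - b j)" by (simp add: sqd_ip)
    also have "\<dots> = ip D' (q i - q j) (q i - q j) - 2 * ip D' (q i - q j) (comb (Vt \<times> Vt) \<delta> (pd q))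
        + ip D' (comb (Vt \<times> Vt) \<delta> (pd q)) (comb (Vt \<times> Vt) \<delta> (pd q))"
      unfolding bd by (rule ip_expand)
    finally show "sqd D' (b i) (b j) = sqd D' (q i) (q j) - sqd dt (p i) (p j)"
      using x1 x2 by (simp add: sqd_ip)
  qed
  show ?thesis using c2 c3 c4 by blast
qed

lemma c5: "F.dim (pd q ` (Vt \<times> Vt)) \<le> dt"
proof -
  obtain Bp where Bp: "Bp \<subseteq> Ap" "F.independent Bp" "Ap \<subseteq> F.span Bp" "card Bp = F.dim Ap"
    by (rule F.basis_exists)
  have fBp: "finite Bp" using Bp(1) finAp by (rule finite_subset)
  define h where "h x = (SOME s. s \<in> Vt \<times> Vt \<and> pd p s = x)" for x
  have h: "h x \<in> Vt \<times> Vt \<and> pd p (h x) = x" if "x \<in> Bp" for x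
  proof -
    from that Bp(1) obtain s where "s \<in> Vt \<times> Vt \<and> pd p s = x" by (auto simp: Ap_def)
    from someI[where P="\<lambda>s. s \<in> Vt \<times> Vt \<and> pd p s = x", OF this] show ?thesis unfolding h_def .
  qed
  define Kb where "Kb = h ` Bp"
  have Kb: "Kb \<subseteq> Vt \<times> Vt" unfolding Kb_def by (rule image_subsetI) (use h in blast)
  have fKb: "finite Kb" using fBp by (simp add: Kb_def)
  have pKb: "pd p ` Kb = Bp"
  proof -
    have "pd p ` Kb = (pd p \<circ> h) ` Bp" by (simp add: Kb_def image_comp)
    also have "\<dots> = id ` Bp" using h by (intro image_cong) auto
    finally show ?thesis by simp
  qed
  have cKb: "card Kb \<le> dt" using card_image_le[OF fBp, of h] Bp(4) dim_Ap by (simp add: Kb_def)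
  have "pd q ` (Vt \<times> Vt) \<subseteq> F.span (pd q ` Kb)"
  proof
    fix z assume "z \<in> pd q ` (Vt \<times> Vt)"
    then obtain k l where kl: "k \<in> Vt" "l \<in> Vt" "z = q k - q l" by (auto simp: pd_def)
    have "p k - p l \<in> F.span (pd p ` Kb)" using kl Bp(3) pKb by (auto simp: Ap_def pd_def image_iff)
    then obtain c where c: "p k - p l = comb Kb c (pd p)" using span_comb[OF fKb] by blast
    have "q k - q l = comb Kb c (pd q)"
    proof
      fix t
      show "(q k - q l) t = comb Kb c (pd q) t"
      proof (cases "t < D'")
        case True
        from transfer_zero[OF ipVt Kb kl(1,2) c True] show ?thesis by simp
      next
        case False
        then have z: "\<forall>x\<in>Vt. q x t = 0" using Vt_sub q_zero by auto
        then have "comb Kb c (pd q) t = 0"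
          unfolding comb_def using Kb by (intro sum.neutral) (auto simp: pd_def)
        then show ?thesis using z kl by simp
      qed
    qed
    then show "z \<in> F.span (pd q ` Kb)" using kl comb_in_span[OF fKb] by simp
  qed
  then have "F.dim (pd q ` (Vt \<times> Vt)) \<le> card (pd q ` Kb)" using fKb by (intro F.dim_le_card) auto
  also have "\<dots> \<le> card Kb" by (rule card_image_le[OF fKb])
  finally show ?thesis using cKb by simp
qed

end

lemma cone_equiv:
  assumes eq: "equivalent_fw V E d p D' q"
    and b2: "\<forall>i\<in>V. \<forall>j\<in>V. sqd D' (b i) (b j) = sqd D' (q i) (q j) - sqd dt (p i) (p j)"
    and b3: "\<forall>i\<in>V. \<forall>k\<ge>D'. b i k = 0"
  shows "equivalent_fw CV CE (d - dt) pc D' (\<lambda>x. b (cc x))"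
  unfolding equivalent_fw_def
proof (intro conjI)
  show "in_space D' CV (\<lambda>x. b (cc x))" using b3 cc_V by (simp add: in_space_def)
  show "\<forall>(x,y)\<in>CE. sqd D' (b (cc x)) (b (cc y)) = sqd (d - dt) (pc x) (pc y)"
  proof (clarify)
    fix x y assume xy: "(x,y) \<in> CE"
    then have CV: "x \<in> CV" "y \<in> CV" using CE_CV by auto
    have V: "cc x \<in> V" "cc y \<in> V" using cc_V CV by auto
    have known: "sqd D' (q (cc x)) (q (cc y)) = sqd d (p (cc x)) (p (cc y))"
    proof -
      have rV: "r \<in> V" using r_in Vt_sub by auto
      from xy consider (a) i where "x = None" "y = Some i" "i \<in> W"
        | (b) i where "x = Some i" "y = None" "i \<in> W"
        | (c) i j where "x = Some i" "y = Some j" "(i,j) \<in> E"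
        by (auto simp: CE_def cone_edges_def induced_def)
      then show ?thesis
      proof cases
        case a then show ?thesis using c1[OF eq _ r_in, of i] by (simp add: cc_def sqd_sym W_def)
      next
        case b then show ?thesis using c1[OF eq _ r_in, of i] by (simp add: cc_def W_def)
      next
        case c then show ?thesis using q_edge[OF eq] by (simp add: cc_def)
      qed
    qed
    show "sqd D' (b (cc x)) (b (cc y)) = sqd (d - dt) (pc x) (pc y)"
      using b2 V known sqd_p[OF V] cmap_cc CV by simp
  qed
qed

lemma ur_bwd:
  assumes ur: "universally_rigid CV CE (d - dt) pc" shows "universally_rigid V E d p"
  unfolding universally_rigid_def
proof (intro allI impI ballI)
  fix D' q i j assume eq: "equivalent_fw V E d p D' q" and ij: "i \<in> V" "j \<in> V"
  obtain b where b2: "\<forall>i\<in>V. \<forall>j\<in>V. sqd D' (b i) (b j) = sqd D' (q i) (q j) - sqd dt (p i) (p j)"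
    and b3: "\<forall>i\<in>V. \<forall>k\<ge>D'. b i k = 0" using construct[OF eq] by blast
  have all: "\<forall>x\<in>CV. \<forall>y\<in>CV. sqd D' (b (cc x)) (b (cc y)) = sqd (d - dt) (pc x) (pc y)"
    using ur cone_equiv[OF eq b2 b3] unfolding universally_rigid_def by blast
  show "sqd D' (q i) (q j) = sqd d (p i) (p j)"
  proof (cases "i \<in> Vt \<or> j \<in> Vt")
    case True
    then show ?thesis
    proof
      assume "i \<in> Vt"
      then show ?thesis using c1[OF eq ij(2)] sqd_sym[of D' "q i"] sqd_sym[of d "p i"] by simp
    next
      assume "j \<in> Vt"
      then show ?thesis using c1[OF eq ij(1)] by simp
    qed
  next
    case False
    then have W: "i \<in> W" "j \<in> W" using ij by (auto simp: W_def)
    have CV: "Some i \<in> CV" "Some j \<in> CV" using W by (auto simp: CV_def cone_vertices_def)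
    have cm: "cmap i = Some i" "cmap j = Some j" using False by (auto simp: cmap_def)
    have "sqd D' (b i) (b j) = sqd (d - dt) (pc (Some i)) (pc (Some j))"
      using all CV unfolding cc_def by fastforce
    then show ?thesis using b2 ij sqd_p[OF ij] cm by simp
  qed
qed

lemma dim_cone_pc: "F.dim (pd pc ` (CV \<times> CV)) \<le> d - dt"
proof (rule dim_supported, clarify)
  fix x y k assume "d - dt \<le> k"
  then show "pd pc (x,y) k = 0" using p0_space
    by (simp add: pd_def pc_def cone_config_def proj2_def split: option.splits)
qed

lemma dr_bwd:
  assumes dr: "dimensionally_rigid CV CE (d - dt) pc" shows "dimensionally_rigid V E d p"
  unfolding dimensionally_rigid_def
proof (intro allI impI)
  fix D' q assume eq: "equivalent_fw V E d p D' q"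
  obtain b where b2: "\<forall>i\<in>V. \<forall>j\<in>V. sqd D' (b i) (b j) = sqd D' (q i) (q j) - sqd dt (p i) (p j)"
    and b3: "\<forall>i\<in>V. \<forall>k\<ge>D'. b i k = 0"
    and b4: "\<forall>i\<in>V. (q i - q r) - (b i - b r) \<in> F.span (pd q ` (Vt \<times> Vt))"
    using construct[OF eq] by blast
  define q' where "q' x = b (cc x)" for x
  have "affdim CV q' \<le> affdim CV pc"
    using dr cone_equiv[OF eq b2 b3] unfolding dimensionally_rigid_def q'_def by blast
  then have dq': "F.dim (pd q' ` (CV \<times> CV)) \<le> d - dt"
    using dim_cone_pc CV_ne by (simp add: affdim_eq)
  have rV: "r \<in> V" using r_in Vt_sub by auto
  have bq': "b i = q' (cmap i)" if i: "i \<in> V" for i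
  proof (cases "i \<in> Vt")
    case False then show ?thesis by (simp add: q'_def cc_def cmap_def)
  next
    case True
    have "sqd D' (b i) (b r) = sqd D' (q i) (q r) - sqd dt (p i) (p r)" using b2 i rV by blast
    also have "\<dots> = 0" using c1[OF eq i r_in] sqd_p[OF i rV] True r_in by (simp add: cmap_def)
    finally have "ip D' (b i - b r) (b i - b r) = 0" by (simp add: sqd_ip)
    then have "b i = b r"
    proof -
      assume z: "ip D' (b i - b r) (b i - b r) = 0"
      show "b i = b r"
      proof
        fix t show "b i t = b r t"
        proof (cases "t < D'")
          case True then show ?thesis using ip_self_zero[OF z True] by simp
        next
          case False then show ?thesis using b3 i rV by simp
        qed
      qed
    qed
    then show ?thesis using True r_in by (simp add: q'_def cc_def cmap_def)
  qed
  have cq: "pd q' ` (CV \<times> CV) = pd b ` (V \<times> V)"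
    unfolding cone_diffs by (rule image_cong) (auto simp: pd_def bq')
  have "pd q ` (V \<times> V) \<subseteq> F.span (pd q ` (Vt \<times> Vt) \<union> pd b ` (V \<times> V))"
  proof
    fix z assume "z \<in> pd q ` (V \<times> V)"
    then obtain i j where ij: "i \<in> V" "j \<in> V" "z = q i - q j" by (auto simp: pd_def)
    let ?S = "pd q ` (Vt \<times> Vt) \<union> pd b ` (V \<times> V)"
    have s1: "(q i - q r) - (b i - b r) \<in> F.span ?S" "(q j - q r) - (b j - b r) \<in> F.span ?S"
      using b4 ij F.span_mono[of "pd q ` (Vt \<times> Vt)" ?S] by blast+
    have "b i - b j \<in> ?S" using ij by (auto simp: pd_def image_iff)
    then have s2: "b i - b j \<in> F.span ?S" by (rule F.span_base)
    have "z = ((q i - q r) - (b i - b r)) - ((q j - q r) - (b j - b r)) + (b i - b j)"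
      using ij by (simp add: fun_eq_iff)
    then show "z \<in> F.span ?S" using s1 s2 by (simp only: F.span_add F.span_diff)
  qed
  then have "F.dim (pd q ` (V \<times> V)) \<le> F.dim (pd q ` (Vt \<times> Vt)) + F.dim (pd b ` (V \<times> V))"
    using finV finVt by (intro dim_union_le) auto
  also have "\<dots> \<le> dt + (d - dt)" using c5[OF eq] dq' cq by simp
  finally have "F.dim (pd q ` (V \<times> V)) \<le> d" using dt_less by simp
  then show "affdim V q \<le> affdim V p" using p_dim V_ne by (simp add: affdim_eq)
qed

end


theorem mainTheorem11:
  fixes V Vt :: "'v set" and E :: "('v \<times> 'v) set"
    and d dt :: nat and p :: "'v \<Rightarrow> nat \<Rightarrow> real" and p0 :: "nat \<Rightarrow> real"
  assumes finV: "finite V"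
    and edges: "E \<subseteq> V \<times> V" and symE: "sym E" and irrE: "\<forall>i. (i,i) \<notin> E"
    and p_space: "in_space d V p"
    and p_dim: "affdim V p = int d"
    and Vt_sub: "Vt \<subseteq> V"
    and Vt_ur: "universally_rigid Vt (induced E Vt) d p"
    and Vt_dim: "affdim Vt p = int dt"
    and dt_less: "dt < d"
    and nbrs: "\<forall>i \<in> V - Vt. affdim (neighbours E i \<inter> Vt) p = int dt"
    and p0_space: "\<forall>k\<ge>d - dt. p0 k = 0"
    and coords: "\<forall>i\<in>Vt. \<forall>k. dt \<le> k \<and> k < d \<longrightarrow> p i k = p0 (k - dt)"
  shows "(universally_rigid V E d p \<longleftrightarrow>
            universally_rigid (cone_vertices (V - Vt)) (cone_edges (V - Vt) (induced E (V - Vt)))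
              (d - dt) (cone_config p0 (\<lambda>i. proj2 d dt (p i))))
       \<and> (dimensionally_rigid V E d p \<longleftrightarrow>
            dimensionally_rigid (cone_vertices (V - Vt)) (cone_edges (V - Vt) (induced E (V - Vt)))
              (d - dt) (cone_config p0 (\<lambda>i. proj2 d dt (p i))))"
  proof -
  interpret setting V Vt E d dt p p0
    by (rule setting.intro) (use assms in auto)
  show ?thesis
    using ur_fwd ur_bwd dr_fwd dr_bwd unfolding CV_def CE_def pc_def W_def by blast
qed

end
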